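(* Let $\mathbb P=\mathrm{Cauchy}(l_1,s_1)$, $\mathbb Q=\mathrm{Cauchy}(l_2,s_2)$ with $s_1,s_2>0$ and $\delta=l_1-l_2$. Then \[ \rho_{1/2}(\mathbb P,\mathbb Q)=\int_{\mathbb R}\sqrt{p_{l_1,s_1}(x)p_{l_2,s_2}(x)}\,\mathrm dx=\frac{4\sqrt{s_1s_2}}{\pi\sqrt{(s_1+s_2)^2+\delta^2}}\,K\!\left(\frac{(s_1-s_2)^2+\delta^2}{(s_1+s_2)^2+\delta^2}\right), \] and $D_C(\mathbb P,\mathbb Q)=D_{B,1/2}(\mathbb P,\mathbb Q)=-\ln\rho_{1/2}(\mathbb P,\mathbb Q)$.
   Context: Cauchy density $p_{l,s}(x)=\frac{s}{\pi(s^2+(x-l)^2)}$ on $\mathbb R$. $K(m)=\int_0^{\pi/2}(1-m\sin^2u)^{-1/2}\,\mathrm du$ for $m\in[0,1)$ is the complete elliptic integral of the first kind. Unweighted quantities: $\rho_\alpha(\mathbb P,\mathbb Q)=\int_{\mathbb R}p_{l_1,s_1}^\alpha p_{l_2,s_2}^{1-\alpha}\,\mathrm dx$, $D_{B,\alpha}=-\ln\rho_\alpha$, $D_C(\mathbb P,\mathbb Q)=\max_{\alpha\in[0,1]}D_{B,\alpha}(\mathbb P,\mathbb Q)$. *)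

theory Defs
  imports "HOL-Analysis.Analysis"
begin

definition cauchy_pdf :: "real \<Rightarrow> real \<Rightarrow> real \<Rightarrow> real" where
  "cauchy_pdf l s x = s / (pi * (s\<^sup>2 + (x - l)\<^sup>2))"

definition ellipK :: "real \<Rightarrow> real" where
  "ellipK m = (LBINT u=0..pi/2. 1 / sqrt (1 - m * (sin u)\<^sup>2))"

definition rho_cauchy :: "real \<Rightarrow> real \<Rightarrow> real \<Rightarrow> real \<Rightarrow> real \<Rightarrow> real" where
  "rho_cauchy \<alpha> l1 s1 l2 s2 =
     (LINT x|lborel. cauchy_pdf l1 s1 x powr \<alpha> * cauchy_pdf l2 s2 x powr (1 - \<alpha>))"

definition DB_cauchy :: "real \<Rightarrow> real \<Rightarrow> real \<Rightarrow> real \<Rightarrow> real \<Rightarrow> real" where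
  "DB_cauchy \<alpha> l1 s1 l2 s2 = - ln (rho_cauchy \<alpha> l1 s1 l2 s2)"

text \<open>Chernoff information: maximum over alpha in [0,1] (rendered as a supremum).\<close>
definition DC_cauchy :: "real \<Rightarrow> real \<Rightarrow> real \<Rightarrow> real \<Rightarrow> real" where
  "DC_cauchy l1 s1 l2 s2 = (SUP \<alpha>\<in>{0..1}. DB_cauchy \<alpha> l1 s1 l2 s2)"

end

theory Submission
  imports Defs
begin


lemma pdf_pos: "s > 0 \<Longrightarrow> cauchy_pdf l s x > 0"
  unfolding cauchy_pdf_def by (intro divide_pos_pos mult_pos_pos) (auto intro: add_pos_nonneg)

lemma pdf_cont: "s > 0 \<Longrightarrow> continuous_on UNIV (cauchy_pdf l s)"
  unfolding cauchy_pdf_def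
  by (intro continuous_intros) (auto simp: add_pos_nonneg)

lemma pdf_meas[measurable]: "s > 0 \<Longrightarrow> cauchy_pdf l s \<in> borel_measurable borel"
  using pdf_cont by (simp add: borel_measurable_continuous_onI)

lemma hk_lborel:
  fixes f :: "real \<Rightarrow> real"
  assumes f[measurable]: "f \<in> borel_measurable borel" and nn: "\<And>x. 0 \<le> f x"
    and I: "(f has_integral I) UNIV"
  shows "integrable lborel f" "integral\<^sup>L lborel f = I"
proof -
  have N: "(\<integral>\<^sup>+x. ennreal (f x) \<partial>lborel) = ennreal I"
    using nn_integral_has_integral_lborel[OF f nn I] by simp
  show "integrable lborel f"
    by (rule integrableI_nn_integral_finite[OF _ _ N]) (auto simp: nn)
  have "I \<ge> 0" using has_integral_nonneg[OF I] nn by auto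
  then show "integral\<^sup>L lborel f = I"
    using integral_eq_nn_integral[of f lborel] N nn by simp
qed



lemma tan_subst:
  fixes f :: "real \<Rightarrow> real"
  assumes R: "R > 0" and nn: "\<And>x. 0 \<le> f x"
    and I: "((\<lambda>u. R / (2 * (cos (u/2))\<^sup>2) * f (c + R * tan (u/2))) has_integral I) {-pi<..<pi}"
  shows "(f has_integral I) UNIV"
proof -
  define S where "S = {-pi<..<(pi::real)}"
  define g where "g = (\<lambda>u::real. c + R * tan (u/2))"
  define g' where "g' = (\<lambda>u::real. R / (2 * (cos (u/2))\<^sup>2))"
  have cpos: "cos (u/2) > 0" if "u \<in> S" for u
    using that by (intro cos_gt_zero_pi) (auto simp: S_def)
  have der: "(g has_field_derivative g' u) (at u within S)" if "u \<in> S" for u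
  proof -
    have "cos (u/2) \<noteq> 0" using cpos[OF that] by simp
    then have "((\<lambda>u. c + R * tan (u/2)) has_field_derivative (R * (inverse ((cos (u/2))\<^sup>2) * (1/2)))) (at u)"
      by (auto intro!: derivative_eq_intros DERIV_tan[THEN DERIV_chain2] simp: field_simps)
    then show ?thesis unfolding g_def g'_def
      by (rule has_field_derivative_at_within[THEN DERIV_cong]) (simp add: field_simps)
  qed
  have inj: "inj_on g S"
  proof (rule inj_onI)
    fix u v assume uv: "u \<in> S" "v \<in> S" "g u = g v"
    then have "tan (u/2) = tan (v/2)" using R by (simp add: g_def)
    then have "arctan (tan (u/2)) = arctan (tan (v/2))" by simp
    then show "u = v" using uv(1,2) by (subst (asm) (1 2) arctan_tan) (auto simp: S_def)
  qed
  have img: "g ` S = UNIV"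
  proof -
    have "y \<in> g ` S" for y
    proof
      show "y = g (2 * arctan ((y - c)/R))" using R by (simp add: g_def tan_arctan)
      show "2 * arctan ((y - c)/R) \<in> S" using arctan_bounded[of "(y-c)/R"] by (auto simp: S_def)
    qed
    then show ?thesis by auto
  qed
  have g'pos: "g' u \<ge> 0" for u unfolding g'_def using R by simp
  have "(\<lambda>x. \<bar>g' x\<bar> * f (g x)) absolutely_integrable_on S \<and> integral S (\<lambda>x. \<bar>g' x\<bar> * f (g x)) = I"
  proof -
    have e: "(\<lambda>x. \<bar>g' x\<bar> * f (g x)) = (\<lambda>u. R / (2 * (cos (u/2))\<^sup>2) * f (c + R * tan (u/2)))"
      using R by (auto simp: g_def g'_def abs_of_pos)
    have "(\<lambda>u. R / (2 * (cos (u/2))\<^sup>2) * f (c + R * tan (u/2))) absolutely_integrable_on S"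
      using I R nn unfolding S_def
      by (subst absolutely_integrable_on_iff_nonneg) (auto intro!: mult_nonneg_nonneg)
    then show ?thesis unfolding e using I by (auto simp: S_def integral_unique)
  qed
  then have "f absolutely_integrable_on (g ` S) \<and> integral (g ` S) f = I"
    using has_absolute_integral_change_of_variables_1'[of S g g' f I] der inj
    by (auto simp: S_def)
  then show ?thesis using img by (auto simp: absolutely_integrable_on_def)
qed



lemma has_integral_UNIV_minus0:
  fixes f :: "real \<Rightarrow> real"
  shows "(f has_integral I) (-{0}) \<longleftrightarrow> (f has_integral I) UNIV"
  by (rule has_integral_spike_set_eq) (auto intro: negligible_subset[of "{0}"])

lemma inv_subst:
  fixes f :: "real \<Rightarrow> real"
  assumes nn: "\<And>x. 0 \<le> f x"
    and I: "((\<lambda>y. f (-1/y) / y\<^sup>2) has_integral I) UNIV"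
  shows "(f has_integral I) UNIV"
proof -
  define S where "S = -{0::real}"
  define g where "g = (\<lambda>y::real. -1/y)"
  define g' where "g' = (\<lambda>y::real. 1/y\<^sup>2)"
  have der: "(g has_field_derivative g' u) (at u within S)" if "u \<in> S" for u
  proof -
    have "u \<noteq> 0" using that by (auto simp: S_def)
    then show ?thesis unfolding g_def g'_def
      by (auto intro!: derivative_eq_intros simp: field_simps power2_eq_square)
  qed
  have inj: "inj_on g S"
    by (rule inj_onI) (auto simp: g_def S_def field_simps)
  have img: "g ` S = S"
  proof -
    have "y \<in> g ` S" if "y \<in> S" for y
    proof
      show "y = g (-1/y)" using that by (simp add: g_def S_def)
      show "-1/y \<in> S" using that by (auto simp: S_def)
    qed
    moreover have "g ` S \<subseteq> S" by (auto simp: g_def S_def)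
    ultimately show ?thesis by auto
  qed
  have e: "(\<lambda>x. \<bar>g' x\<bar> * f (g x)) = (\<lambda>y. f (-1/y) / y\<^sup>2)"
    by (auto simp: g_def g'_def)
  have I': "((\<lambda>y. f (-1/y) / y\<^sup>2) has_integral I) S"
    using I has_integral_UNIV_minus0 unfolding S_def by blast
  have "(\<lambda>y. f (-1/y) / y\<^sup>2) absolutely_integrable_on S"
    using I' nn by (subst absolutely_integrable_on_iff_nonneg) auto
  then have "(\<lambda>x. \<bar>g' x\<bar> * f (g x)) absolutely_integrable_on S \<and> integral S (\<lambda>x. \<bar>g' x\<bar> * f (g x)) = I"
    unfolding e using I' by (auto simp: integral_unique)
  then have "f absolutely_integrable_on (g ` S) \<and> integral (g ` S) f = I"
    using has_absolute_integral_change_of_variables_1'[of S g g' f I] der inj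
    by (auto simp: S_def)
  then have "(f has_integral I) S" using img by (auto simp: absolutely_integrable_on_def)
  then show ?thesis using has_integral_UNIV_minus0 unfolding S_def by blast
qed



definition FF :: "real \<Rightarrow> real \<Rightarrow> real \<Rightarrow> real \<Rightarrow> real \<Rightarrow> real \<Rightarrow> real" where
  "FF \<alpha> l1 s1 l2 s2 x = cauchy_pdf l1 s1 x powr \<alpha> * cauchy_pdf l2 s2 x powr (1 - \<alpha>)"

lemma rho_FF: "rho_cauchy \<alpha> l1 s1 l2 s2 = integral\<^sup>L lborel (FF \<alpha> l1 s1 l2 s2)"
  unfolding rho_cauchy_def FF_def by simp

lemma pdf_hasint:
  assumes s: "s > 0"
  shows "(cauchy_pdf l s has_integral 1) UNIV"
proof (rule tan_subst[OF s, of _ l])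
  show "0 \<le> cauchy_pdf l s x" for x using pdf_pos[OF s] less_imp_le by blast
  have e: "s / (2 * (cos (u/2))\<^sup>2) * cauchy_pdf l s (l + s * tan (u/2)) = 1 / (2*pi)"
    if "u \<in> {-pi<..<pi}" for u
  proof -
    have c: "cos (u/2) > 0" using that by (intro cos_gt_zero_pi) auto
    have "s\<^sup>2 + (s * tan (u/2))\<^sup>2 = s\<^sup>2 / (cos (u/2))\<^sup>2"
      using c by (simp add: tan_def field_simps power2_eq_square) (metis sin_cos_squared_add3 distrib_left mult.commute mult_1)
    then have "cauchy_pdf l s (l + s * tan (u/2)) = s / (pi * (s\<^sup>2 / (cos (u/2))\<^sup>2))"
      unfolding cauchy_pdf_def by simp
    then show ?thesis using c s by (simp add: field_simps power2_eq_square)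
  qed
  have "((\<lambda>u. 1 / (2*pi)) has_integral 1) {-pi..pi}"
    using has_integral_const_real[of "1/(2*pi)" "-pi" pi] by simp
  then have "((\<lambda>u. 1 / (2*pi)) has_integral 1) {-pi<..<pi}"
    by (simp add: has_integral_Icc_iff_Ioo)
  then show "((\<lambda>u. s / (2 * (cos (u/2))\<^sup>2) * cauchy_pdf l s (l + s * tan (u/2))) has_integral 1) {-pi<..<pi}"
    using e by (subst has_integral_cong) auto
qed

lemma pdf_int: assumes s: "s > 0" shows "integrable lborel (cauchy_pdf l s)"
  by (rule hk_lborel(1)[OF pdf_meas[OF s] _ pdf_hasint[OF s]]) (use pdf_pos[OF s] less_imp_le in blast)

lemma FF_meas[measurable]: "s1 > 0 \<Longrightarrow> s2 > 0 \<Longrightarrow> FF \<alpha> l1 s1 l2 s2 \<in> borel_measurable borel"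
  unfolding FF_def by measurable

lemma FF_pos: "s1 > 0 \<Longrightarrow> s2 > 0 \<Longrightarrow> FF \<alpha> l1 s1 l2 s2 x > 0"
  unfolding FF_def using pdf_pos[of s1 l1 x] pdf_pos[of s2 l2 x] by simp

lemma powr_bound:
  fixes a b :: real
  assumes "a > 0" "b > 0" "0 \<le> \<alpha>" "\<alpha> \<le> 1"
  shows "a powr \<alpha> * b powr (1 - \<alpha>) \<le> a + b"
proof -
  let ?M = "max a b"
  have "a powr \<alpha> \<le> ?M powr \<alpha>" using assms by (intro powr_mono2) auto
  moreover have "b powr (1-\<alpha>) \<le> ?M powr (1-\<alpha>)" using assms by (intro powr_mono2) auto
  ultimately have "a powr \<alpha> * b powr (1 - \<alpha>) \<le> ?M powr \<alpha> * ?M powr (1-\<alpha>)"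
    using assms by (intro mult_mono) auto
  also have "\<dots> = ?M" using assms by (simp add: powr_add[symmetric])
  also have "\<dots> \<le> a + b" using assms by auto
  finally show ?thesis .
qed

lemma FF_int:
  assumes "s1 > 0" "s2 > 0" "0 \<le> \<alpha>" "\<alpha> \<le> 1"
  shows "integrable lborel (FF \<alpha> l1 s1 l2 s2)"
proof (rule Bochner_Integration.integrable_bound)
  show "integrable lborel (\<lambda>x. cauchy_pdf l1 s1 x + cauchy_pdf l2 s2 x)"
    using assms pdf_int by auto
  show "FF \<alpha> l1 s1 l2 s2 \<in> borel_measurable lborel" using assms by simp
  show "AE x in lborel. norm (FF \<alpha> l1 s1 l2 s2 x) \<le> norm (cauchy_pdf l1 s1 x + cauchy_pdf l2 s2 x)"
  proof (rule AE_I2)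
    fix x
    have a: "cauchy_pdf l1 s1 x > 0" "cauchy_pdf l2 s2 x > 0" using assms pdf_pos by auto
    then show "norm (FF \<alpha> l1 s1 l2 s2 x) \<le> norm (cauchy_pdf l1 s1 x + cauchy_pdf l2 s2 x)"
      using powr_bound[OF a assms(3,4)] by (simp add: FF_def)
  qed
qed



lemma powr_combine:
  fixes c A B :: real
  assumes "c > 0" "A \<ge> 0" "B \<ge> 0"
  shows "c * (A powr \<alpha> * B powr (1 - \<alpha>)) = (c*A) powr \<alpha> * (c*B) powr (1 - \<alpha>)"
proof -
  have "(c*A) powr \<alpha> * (c*B) powr (1 - \<alpha>) = (c powr \<alpha> * c powr (1-\<alpha>)) * (A powr \<alpha> * B powr (1 - \<alpha>))"
    using assms by (simp add: powr_mult)
  also have "c powr \<alpha> * c powr (1-\<alpha>) = c" using assms by (simp add: powr_add[symmetric])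
  finally show ?thesis by simp
qed

lemma pdf_affine:
  assumes s: "s > 0" and b: "b \<noteq> 0"
  shows "\<bar>b\<bar> * cauchy_pdf l s (a + b*x) = cauchy_pdf ((l-a)/b) (s/\<bar>b\<bar>) x"
proof -
  have bb: "\<bar>b\<bar>\<^sup>2 = b\<^sup>2" by simp
  have "(s/\<bar>b\<bar>)\<^sup>2 + (x - (l-a)/b)\<^sup>2 = (s\<^sup>2 + (a + b*x - l)\<^sup>2) / b\<^sup>2"
    using b by (simp add: power_divide field_simps power2_eq_square)
  then have "cauchy_pdf ((l-a)/b) (s/\<bar>b\<bar>) x = (s/\<bar>b\<bar>) / (pi * ((s\<^sup>2 + (a + b*x - l)\<^sup>2) / b\<^sup>2))"
    unfolding cauchy_pdf_def by simp
  also have "\<dots> = \<bar>b\<bar> * s / (pi * (s\<^sup>2 + (a + b*x - l)\<^sup>2))"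
  proof -
    have bb': "b\<^sup>2 = \<bar>b\<bar> * \<bar>b\<bar>" by (simp add: power2_eq_square)
    have X: "s\<^sup>2 + (a + b*x - l)\<^sup>2 > 0" using s by (simp add: add_pos_nonneg)
    have gen: "\<And>c X. c > 0 \<Longrightarrow> X > 0 \<Longrightarrow> (s/c) / (pi * (X / (c*c))) = c * s / (pi * X)"
      by (simp add: field_simps)
    show ?thesis unfolding bb' using b X by (intro gen) auto
  qed
  finally show ?thesis unfolding cauchy_pdf_def by simp
qed

lemma rho_affine:
  assumes s1: "s1 > 0" and s2: "s2 > 0" and b: "b \<noteq> 0"
  shows "rho_cauchy \<alpha> l1 s1 l2 s2 = rho_cauchy \<alpha> ((l1-a)/b) (s1/\<bar>b\<bar>) ((l2-a)/b) (s2/\<bar>b\<bar>)"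
proof -
  have "rho_cauchy \<alpha> l1 s1 l2 s2 = \<bar>b\<bar> * (LINT x|lborel. FF \<alpha> l1 s1 l2 s2 (a + b*x))"
    unfolding rho_FF using lborel_integral_real_affine[OF b, of "FF \<alpha> l1 s1 l2 s2" a] by simp
  also have "\<dots> = (LINT x|lborel. \<bar>b\<bar> * FF \<alpha> l1 s1 l2 s2 (a + b*x))" by simp
  also have "\<dots> = (LINT x|lborel. FF \<alpha> ((l1-a)/b) (s1/\<bar>b\<bar>) ((l2-a)/b) (s2/\<bar>b\<bar>) x)"
  proof (rule Bochner_Integration.integral_cong[OF refl])
    fix x
    show "\<bar>b\<bar> * FF \<alpha> l1 s1 l2 s2 (a + b*x) = FF \<alpha> ((l1-a)/b) (s1/\<bar>b\<bar>) ((l2-a)/b) (s2/\<bar>b\<bar>) x"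
      unfolding FF_def
      using powr_combine[of "\<bar>b\<bar>" "cauchy_pdf l1 s1 (a + b*x)" "cauchy_pdf l2 s2 (a + b*x)" \<alpha>]
        pdf_pos[OF s1] pdf_pos[OF s2] b
      by (simp add: pdf_affine[OF s1 b] pdf_affine[OF s2 b] less_imp_le)
  qed
  finally show ?thesis unfolding rho_FF .
qed

lemma pdf_inv:
  assumes s: "s > 0" and y: "y \<noteq> 0"
  shows "cauchy_pdf l s (-1/y) / y\<^sup>2 = cauchy_pdf (-l/(l\<^sup>2+s\<^sup>2)) (s/(l\<^sup>2+s\<^sup>2)) y"
proof -
  define r where "r = l\<^sup>2 + s\<^sup>2"
  have r: "r > 0" unfolding r_def using s by (simp add: add_nonneg_pos)
  have e1: "(s\<^sup>2 + (-1/y - l)\<^sup>2) * y\<^sup>2 = r*y\<^sup>2 + 2*l*y + 1"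
    using y unfolding r_def by (simp add: field_simps power2_eq_square)
  have e2a: "(s/r)\<^sup>2 + (y - -l/r)\<^sup>2 = (s\<^sup>2 + (r*y + l)\<^sup>2) / r\<^sup>2"
    using r by (simp add: field_simps power2_eq_square)
  have e2b: "s\<^sup>2 + (r*y + l)\<^sup>2 = r * (r*y\<^sup>2 + 2*l*y + 1)"
    unfolding r_def by (simp add: power2_eq_square algebra_simps)
  have e2: "(s/r)\<^sup>2 + (y - -l/r)\<^sup>2 = (r*y\<^sup>2 + 2*l*y + 1) / r"
    unfolding e2a e2b using r by (simp add: power2_eq_square)
  have "cauchy_pdf l s (-1/y) / y\<^sup>2 = s / (pi * (r*y\<^sup>2 + 2*l*y + 1))"
  proof -
    have "cauchy_pdf l s (-1/y) / y\<^sup>2 = s / (pi * ((s\<^sup>2 + (-1/y - l)\<^sup>2) * y\<^sup>2))"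
      unfolding cauchy_pdf_def by (simp add: divide_divide_eq_left mult.assoc)
    then show ?thesis unfolding e1 .
  qed
  also have "\<dots> = (s/r) / (pi * ((r*y\<^sup>2 + 2*l*y + 1) / r))"
    using r by simp
  also have "\<dots> = cauchy_pdf (-l/r) (s/r) y" unfolding cauchy_pdf_def e2 ..
  finally show ?thesis unfolding r_def .
qed

lemma rho_inv:
  assumes s1: "s1 > 0" and s2: "s2 > 0" and al: "0 \<le> \<alpha>" "\<alpha> \<le> 1"
  shows "rho_cauchy \<alpha> l1 s1 l2 s2
    = rho_cauchy \<alpha> (-l1/(l1\<^sup>2+s1\<^sup>2)) (s1/(l1\<^sup>2+s1\<^sup>2)) (-l2/(l2\<^sup>2+s2\<^sup>2)) (s2/(l2\<^sup>2+s2\<^sup>2))"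
proof -
  define r1 where "r1 = l1\<^sup>2+s1\<^sup>2"
  define r2 where "r2 = l2\<^sup>2+s2\<^sup>2"
  have r: "r1 > 0" "r2 > 0" unfolding r1_def r2_def using s1 s2 by (simp_all add: add_nonneg_pos)
  let ?F = "FF \<alpha> l1 s1 l2 s2"
  let ?G = "FF \<alpha> (-l1/r1) (s1/r1) (-l2/r2) (s2/r2)"
  have s1': "s1/r1 > 0" and s2': "s2/r2 > 0" using r s1 s2 by auto
  have G: "(?G has_integral (integral\<^sup>L lborel ?G)) UNIV"
    by (rule has_integral_integral_lborel[OF FF_int[OF s1' s2' al]])
  have pt: "?F (-1/y) / y\<^sup>2 = ?G y" if y: "y \<noteq> 0" for y
  proof -
    have yy: "1/y\<^sup>2 > 0" using y by simp
    have p1: "cauchy_pdf l1 s1 (-1/y) \<ge> 0" "cauchy_pdf l2 s2 (-1/y) \<ge> 0"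
      using pdf_pos[OF s1, of l1 "-1/y"] pdf_pos[OF s2, of l2 "-1/y"] by simp_all
    have i1: "(1/y\<^sup>2) * cauchy_pdf l1 s1 (-1/y) = cauchy_pdf (-l1/r1) (s1/r1) y"
      using pdf_inv[OF s1 y, of l1] unfolding r1_def by simp
    have i2: "(1/y\<^sup>2) * cauchy_pdf l2 s2 (-1/y) = cauchy_pdf (-l2/r2) (s2/r2) y"
      using pdf_inv[OF s2 y, of l2] unfolding r2_def by simp
    have "?F (-1/y) / y\<^sup>2 = (1/y\<^sup>2) * ?F (-1/y)" by simp
    also have "\<dots> = ((1/y\<^sup>2) * cauchy_pdf l1 s1 (-1/y)) powr \<alpha> * ((1/y\<^sup>2) * cauchy_pdf l2 s2 (-1/y)) powr (1-\<alpha>)"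
      unfolding FF_def by (rule powr_combine[OF yy p1])
    also have "\<dots> = ?G y" unfolding FF_def i1 i2 ..
    finally show ?thesis .
  qed
  have "((\<lambda>y. ?F (-1/y) / y\<^sup>2) has_integral (integral\<^sup>L lborel ?G)) UNIV"
  proof (rule has_integral_spike_finite[of "{0}", OF _ _ G])
    show "?F (-1/y) / y\<^sup>2 = ?G y" if "y \<in> UNIV - {0}" for y using pt[of y] that by simp
  qed simp
  then have "(?F has_integral (integral\<^sup>L lborel ?G)) UNIV"
  proof (rule inv_subst[rotated])
    show "0 \<le> ?F x" for x using FF_pos[OF s1 s2, of \<alpha> l1 l2 x] by simp
  qed
  moreover have "(?F has_integral (integral\<^sup>L lborel ?F)) UNIV"
    by (rule has_integral_integral_lborel[OF FF_int[OF s1 s2 al]])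
  ultimately have "integral\<^sup>L lborel ?F = integral\<^sup>L lborel ?G" using has_integral_unique by blast
  then show ?thesis unfolding rho_FF r1_def r2_def .
qed



lemma alg_canon:
  fixes c q R l s w :: real
  assumes c: "c > 0" and R: "R > 0" and s: "s > 0" and RR: "R\<^sup>2 = l\<^sup>2 + s\<^sup>2"
    and sc: "q\<^sup>2 + c\<^sup>2 = 1" and w: "w = 1 - (l\<^sup>2/R\<^sup>2) * (2*q*c)\<^sup>2" and wpos: "w > 0"
  shows "R / (2 * c\<^sup>2) * sqrt (s / (pi * (s\<^sup>2 + (R*(q/c) - -l)\<^sup>2)) * (s / (pi * (s\<^sup>2 + (R*(q/c) - l)\<^sup>2))))
         = s / (2*pi*R) * (1 / sqrt w)"
proof -
  have xc: "R*(q/c) * c = R*q" using c by simp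
  have A0: "(s\<^sup>2 + (R*(q/c) - -l)\<^sup>2) * c\<^sup>2 = s\<^sup>2*c\<^sup>2 + (R*q + l*c)\<^sup>2"
    using c by (simp add: field_simps power2_eq_square)
  have A1: "s\<^sup>2*c\<^sup>2 + (R*q + l*c)\<^sup>2 = R\<^sup>2 + 2*R*l*q*c"
  proof -
    have "s\<^sup>2*c\<^sup>2 + (R*q + l*c)\<^sup>2 = (l\<^sup>2 + s\<^sup>2)*c\<^sup>2 + R\<^sup>2*q\<^sup>2 + 2*R*l*q*c"
      by (simp add: power2_eq_square algebra_simps)
    also have "\<dots> = R\<^sup>2*(q\<^sup>2 + c\<^sup>2) + 2*R*l*q*c" unfolding RR[symmetric] by (simp add: algebra_simps)
    finally show ?thesis using sc by simp
  qed
  have B0: "(s\<^sup>2 + (R*(q/c) - l)\<^sup>2) * c\<^sup>2 = s\<^sup>2*c\<^sup>2 + (R*q - l*c)\<^sup>2"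
    using c by (simp add: field_simps power2_eq_square)
  have B1: "s\<^sup>2*c\<^sup>2 + (R*q - l*c)\<^sup>2 = R\<^sup>2 - 2*R*l*q*c"
  proof -
    have "s\<^sup>2*c\<^sup>2 + (R*q - l*c)\<^sup>2 = (l\<^sup>2 + s\<^sup>2)*c\<^sup>2 + R\<^sup>2*q\<^sup>2 - 2*R*l*q*c"
      by (simp add: power2_eq_square algebra_simps)
    also have "\<dots> = R\<^sup>2*(q\<^sup>2 + c\<^sup>2) - 2*R*l*q*c" unfolding RR[symmetric] by (simp add: algebra_simps)
    finally show ?thesis using sc by simp
  qed
  have W: "(R\<^sup>2 + 2*R*l*q*c) * (R\<^sup>2 - 2*R*l*q*c) = R\<^sup>2 * R\<^sup>2 * w"
    unfolding w using R by (simp add: field_simps power2_eq_square)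
  define A where "A = s\<^sup>2 + (R*(q/c) - -l)\<^sup>2"
  define B where "B = s\<^sup>2 + (R*(q/c) - l)\<^sup>2"
  have AB: "A * B = (R\<^sup>2 * R\<^sup>2 * w) / (c\<^sup>2 * c\<^sup>2)"
  proof -
    have "(A * c\<^sup>2) * (B * c\<^sup>2) = R\<^sup>2 * R\<^sup>2 * w" unfolding A_def B_def A0 A1 B0 B1 W ..
    then show ?thesis using c by (simp add: field_simps)
  qed
  have "s / (pi * A) * (s / (pi * B)) = (s * c\<^sup>2 / (pi * R\<^sup>2))\<^sup>2 / w"
  proof -
    have "s / (pi * A) * (s / (pi * B)) = s\<^sup>2 / (pi\<^sup>2 * (A*B))" by (simp add: power2_eq_square)
    also have "\<dots> = (s * c\<^sup>2 / (pi * R\<^sup>2))\<^sup>2 / w" unfolding AB using c R wpos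
      by (simp add: field_simps power2_eq_square)
    finally show ?thesis .
  qed
  then have "sqrt (s / (pi * A) * (s / (pi * B))) = (s * c\<^sup>2 / (pi * R\<^sup>2)) / sqrt w"
    using s c R by (simp add: real_sqrt_divide)
  then show ?thesis unfolding A_def[symmetric] B_def[symmetric] using c R wpos
    by (simp add: field_simps power2_eq_square)
qed

definition hK :: "real \<Rightarrow> real \<Rightarrow> real" where
  "hK m u = 1 / sqrt (1 - m * (sin u)\<^sup>2)"

lemma hK_arg_pos: "0 \<le> m \<Longrightarrow> m < 1 \<Longrightarrow> 1 - m * (sin u)\<^sup>2 > (0::real)"
proof -
  assume m: "0 \<le> m" "m < 1"
  have "(sin u)\<^sup>2 \<le> 1" using sin_squared_eq[of u] by simp
  then have "m * (sin u)\<^sup>2 \<le> m" using m by (simp add: mult_left_le)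
  then show ?thesis using m by simp
qed

lemma hK_cont: assumes m: "0 \<le> m" "m < 1" shows "continuous_on A (hK m)"
proof -
  have "1 - m*(sin u)\<^sup>2 \<noteq> 0" for u using hK_arg_pos[OF m, of u] by simp
  then show ?thesis unfolding hK_def by (intro continuous_intros) auto
qed

lemma K_hk:
  assumes "0 \<le> m" "m < 1"
  shows "(hK m has_integral ellipK m) {0..pi/2}"
proof -
  have "ellipK m = (LBINT u=0..pi/2. hK m u)" unfolding ellipK_def hK_def ..
  also have "\<dots> = integral {0..pi/2} (hK m)"
    unfolding zero_ereal_def by (rule interval_integral_eq_integral) (auto intro!: borel_integrable_atLeastAtMost' hK_cont assms)
  finally show ?thesis
    using integrable_continuous_interval[OF hK_cont[OF assms]] by (simp add: has_integral_integral)
qed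

lemma has_integral_shift:
  fixes f :: "real \<Rightarrow> real"
  assumes "(f has_integral i) {a..b}"
  shows "((\<lambda>x. f (x + c)) has_integral i) {a-c..b-c}"
  using has_integral_affinity'[of f i a b 1 c] assms by simp

lemma hK_minus: "hK m (-u) = hK m u" unfolding hK_def by simp
lemma hK_pi_minus: "hK m (pi - u) = hK m u" unfolding hK_def by simp
lemma hK_plus_pi: "hK m (u + pi) = hK m u" unfolding hK_def by (simp add: sin_periodic_pi)

lemma four_K:
  assumes "0 \<le> m" "m < 1"
  shows "(hK m has_integral 4 * ellipK m) {-pi..pi}"
proof -
  note K = K_hk[OF assms]
  have P1: "(hK m has_integral ellipK m) {0..pi/2}" by (rule K)
  have R: "((\<lambda>x. hK m (-x)) has_integral ellipK m) {-(pi/2)..-0}"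
    using K by (subst has_integral_reflect_real)
  then have P3: "(hK m has_integral ellipK m) {-(pi/2)..0}" by (simp add: hK_minus)
  have "((\<lambda>x. hK m (-(x + (-pi)))) has_integral ellipK m) {-(pi/2)-(-pi)..-0-(-pi)}"
    by (rule has_integral_shift[OF R])
  then have P2: "(hK m has_integral ellipK m) {pi/2..pi}"
    by (simp add: hK_pi_minus)
  have "((\<lambda>x. hK m (x + pi)) has_integral ellipK m) {0-pi..pi/2-pi}"
    by (rule has_integral_shift[OF K])
  then have P4: "(hK m has_integral ellipK m) {-pi..-(pi/2)}"
    by (simp add: hK_plus_pi)
  have "(hK m has_integral (ellipK m + ellipK m)) {-pi..0}"
    by (rule has_integral_combine[OF _ _ P4 P3]) (auto simp: pi_gt_zero less_imp_le)
  moreover have "(hK m has_integral (ellipK m + ellipK m)) {0..pi}"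
    by (rule has_integral_combine[OF _ _ P1 P2]) (auto simp: pi_gt_zero less_imp_le)
  ultimately have "(hK m has_integral ((ellipK m + ellipK m) + (ellipK m + ellipK m))) {-pi..pi}"
    by (rule has_integral_combine[rotated 2]) (auto simp: pi_gt_zero less_imp_le)
  then show ?thesis by (simp add: algebra_simps)
qed



lemma sqrt_meas[measurable]: "s1 > 0 \<Longrightarrow> s2 > 0 \<Longrightarrow> (\<lambda>x. sqrt (cauchy_pdf l1 s1 x * cauchy_pdf l2 s2 x)) \<in> borel_measurable borel"
  by measurable

lemma rho_half_sqrt:
  assumes s1: "s1 > 0" and s2: "s2 > 0"
  shows "rho_cauchy (1/2) l1 s1 l2 s2 = (LINT x|lborel. sqrt (cauchy_pdf l1 s1 x * cauchy_pdf l2 s2 x))"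
  unfolding rho_cauchy_def
proof (rule Bochner_Integration.integral_cong[OF refl])
  fix x
  have "cauchy_pdf l1 s1 x \<ge> 0" "cauchy_pdf l2 s2 x \<ge> 0" using pdf_pos[OF s1, of l1 x] pdf_pos[OF s2, of l2 x] by simp_all
  then show "cauchy_pdf l1 s1 x powr (1/2) * cauchy_pdf l2 s2 x powr (1 - 1/2) = sqrt (cauchy_pdf l1 s1 x * cauchy_pdf l2 s2 x)"
    by (simp add: powr_half_sqrt real_sqrt_mult)
qed

lemma canon_rho:
  assumes s: "s > 0"
  shows "rho_cauchy (1/2) (-l) s l s = 2* s/(pi * sqrt(l\<^sup>2+s\<^sup>2)) * ellipK (l\<^sup>2/(l\<^sup>2+s\<^sup>2))"
proof -
  define R where "R = sqrt(l\<^sup>2+s\<^sup>2)"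
  define m where "m = l\<^sup>2/(l\<^sup>2+s\<^sup>2)"
  have lpos: "l\<^sup>2+s\<^sup>2 > 0" using s by (simp add: add_nonneg_pos)
  have R: "R > 0" unfolding R_def using lpos by simp
  have RR: "R\<^sup>2 = l\<^sup>2+s\<^sup>2" unfolding R_def using lpos by simp
  have m: "0 \<le> m" "m < 1" unfolding m_def using s lpos by (auto simp: field_simps)
  define f where "f = (\<lambda>x. sqrt (cauchy_pdf (-l) s x * cauchy_pdf l s x))"
  define I where "I = s/(2 * pi * R) * (4 * ellipK m)"
  have "((\<lambda>u. s/(2 * pi * R) * hK m u) has_integral I) {-pi..pi}"
    unfolding I_def by (rule has_integral_mult_right[OF four_K[OF m]])
  then have H: "((\<lambda>u. s/(2 * pi * R) * hK m u) has_integral I) {-pi<..<pi}"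
    by (simp add: has_integral_Icc_iff_Ioo)
  have pt: "R / (2 * (cos (u/2))\<^sup>2) * f (0 + R * tan (u/2)) = s/(2 * pi * R) * hK m u"
    if u: "u \<in> {-pi<..<pi}" for u
  proof -
    have c: "cos (u/2) > 0" using u by (intro cos_gt_zero_pi) auto
    have sc: "(sin (u/2))\<^sup>2 + (cos (u/2))\<^sup>2 = 1" by simp
    have su: "sin u = 2 * sin (u/2) * cos (u/2)"
      using sin_double[of "u/2"] by simp
    have w: "1 - m * (sin u)\<^sup>2 = 1 - (l\<^sup>2/R\<^sup>2) * (2 * sin (u/2) * cos (u/2))\<^sup>2"
      unfolding su m_def RR ..
    have "R / (2 * (cos (u/2))\<^sup>2) * f (0 + R * tan (u/2)) = s / (2 * pi * R) * (1 / sqrt (1 - m * (sin u)\<^sup>2))"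
      unfolding f_def cauchy_pdf_def tan_def add_0
      by (rule alg_canon[OF c R s RR sc w hK_arg_pos[OF m]])
    then show ?thesis unfolding hK_def .
  qed
  have H': "((\<lambda>u. R / (2 * (cos (u/2))\<^sup>2) * f (0 + R * tan (u/2))) has_integral I) {-pi<..<pi}"
    using H by (subst has_integral_cong[OF pt]) auto
  have fnn: "0 \<le> f x" for x unfolding f_def
    using pdf_pos[OF s, of "-l" x] pdf_pos[OF s, of l x] by simp
  have "(f has_integral I) UNIV" by (rule tan_subst[OF R fnn H'])
  then have "integral\<^sup>L lborel f = I"
    by (intro hk_lborel(2)) (use fnn s in \<open>auto simp: f_def\<close>)
  then have "rho_cauchy (1/2) (-l) s l s = I"
    using rho_half_sqrt[OF s s, of "-l" l] unfolding f_def by simp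
  then show ?thesis unfolding I_def R_def m_def by (simp add: field_simps)
qed



definition mm :: "real \<Rightarrow> real \<Rightarrow> real \<Rightarrow> real \<Rightarrow> real" where
  "mm l1 s1 l2 s2 = ((s1 - s2)\<^sup>2 + (l1 - l2)\<^sup>2) / ((s1 + s2)\<^sup>2 + (l1 - l2)\<^sup>2)"

lemma mm_affine1: "mm ((l1-a)/1) (s1/\<bar>1\<bar>) ((l2-a)/1) (s2/\<bar>1\<bar>) = mm l1 s1 l2 s2"
  unfolding mm_def by simp

lemma mm_inv:
  assumes s1: "s1 > 0" and s2: "s2 > 0"
  shows "mm (-l1/(l1\<^sup>2+s1\<^sup>2)) (s1/(l1\<^sup>2+s1\<^sup>2)) (-l2/(l2\<^sup>2+s2\<^sup>2)) (s2/(l2\<^sup>2+s2\<^sup>2)) = mm l1 s1 l2 s2"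
proof -
  define r1 where "r1 = l1\<^sup>2+s1\<^sup>2"
  define r2 where "r2 = l2\<^sup>2+s2\<^sup>2"
  have r: "r1 > 0" "r2 > 0" unfolding r1_def r2_def using s1 s2 by (simp_all add: add_nonneg_pos)
  have N: "(s1/r1 - s2/r2)\<^sup>2 + (-l1/r1 - -l2/r2)\<^sup>2 = ((s1*r2 - s2*r1)\<^sup>2 + (l2*r1 - l1*r2)\<^sup>2) / (r1*r2)\<^sup>2"
    using r by (simp add: field_simps power2_eq_square)
  have N2: "(s1*r2 - s2*r1)\<^sup>2 + (l2*r1 - l1*r2)\<^sup>2 = r1*r2*((s1 - s2)\<^sup>2 + (l1 - l2)\<^sup>2)"
    unfolding r1_def r2_def by (simp add: power2_eq_square algebra_simps)
  have D: "(s1/r1 + s2/r2)\<^sup>2 + (-l1/r1 - -l2/r2)\<^sup>2 = ((s1*r2 + s2*r1)\<^sup>2 + (l2*r1 - l1*r2)\<^sup>2) / (r1*r2)\<^sup>2"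
    using r by (simp add: field_simps power2_eq_square)
  have D2: "(s1*r2 + s2*r1)\<^sup>2 + (l2*r1 - l1*r2)\<^sup>2 = r1*r2*((s1 + s2)\<^sup>2 + (l1 - l2)\<^sup>2)"
    unfolding r1_def r2_def by (simp add: power2_eq_square algebra_simps)
  have Dpos: "(s1 + s2)\<^sup>2 + (l1 - l2)\<^sup>2 > 0" using s1 s2 by (simp add: add_pos_nonneg)
  have "mm (-l1/r1) (s1/r1) (-l2/r2) (s2/r2)
      = (r1*r2*((s1 - s2)\<^sup>2 + (l1 - l2)\<^sup>2) / (r1*r2)\<^sup>2) / (r1*r2*((s1 + s2)\<^sup>2 + (l1 - l2)\<^sup>2) / (r1*r2)\<^sup>2)"
    unfolding mm_def N D N2 D2 ..
  also have "\<dots> = mm l1 s1 l2 s2"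
  proof -
    have gen: "\<And>k k2 N D::real. k \<noteq> 0 \<Longrightarrow> k2 \<noteq> 0 \<Longrightarrow> (k*N/k2)/(k*D/k2) = N/D" by simp
    show ?thesis unfolding mm_def using r by (intro gen) auto
  qed
  finally show ?thesis unfolding r1_def r2_def .
qed

lemma rho_eqscale:
  assumes s: "s > 0"
  shows "rho_cauchy \<alpha> l1 s l2 s = rho_cauchy \<alpha> (-((l2-l1)/2)) s ((l2-l1)/2) s"
proof -
  have "rho_cauchy \<alpha> l1 s l2 s = rho_cauchy \<alpha> ((l1 - (l1+l2)/2)/1) (s/\<bar>1\<bar>) ((l2 - (l1+l2)/2)/1) (s/\<bar>1\<bar>)"
    by (rule rho_affine[OF s s]) simp
  also have "(l1 - (l1+l2)/2)/1 = -((l2-l1)/2)" by (simp add: field_simps)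
  also have "(l2 - (l1+l2)/2)/1 = (l2-l1)/2" by (simp add: field_simps)
  finally show ?thesis by simp
qed

lemma mm_eqscale: "mm l1 s l2 s = mm (-((l2-l1)/2)) s ((l2-l1)/2) s"
  unfolding mm_def by (simp add: power2_eq_square algebra_simps)

lemma quad_root:
  fixes A B C :: real
  assumes "A \<noteq> 0" "B\<^sup>2 - A*C \<ge> 0"
  shows "\<exists>a. A*a\<^sup>2 - 2*B*a + C = 0"
proof -
  define d where "d = sqrt (B\<^sup>2 - A*C)"
  have dd: "d\<^sup>2 = B\<^sup>2 - A*C" unfolding d_def using assms by simp
  have "A*((B+d)/A)\<^sup>2 - 2*B*((B+d)/A) + C = (d\<^sup>2 - B\<^sup>2 + A*C)/A"
    using assms by (simp add: field_simps power2_eq_square)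
  also have "\<dots> = 0" using dd by simp
  finally show ?thesis by blast
qed

lemma reduce:
  assumes s1: "s1 > 0" and s2: "s2 > 0"
  shows "\<exists>l s. s > 0 \<and> (\<forall>\<alpha>. 0 \<le> \<alpha> \<longrightarrow> \<alpha> \<le> 1 \<longrightarrow> rho_cauchy \<alpha> l1 s1 l2 s2 = rho_cauchy \<alpha> (-l) s l s)
               \<and> mm l1 s1 l2 s2 = mm (-l) s l s"
proof (cases "s1 = s2")
  case True
  then show ?thesis using rho_eqscale[OF s1] mm_eqscale s1 by blast
next
  case False
  have disc: "(s1*l2 - s2*l1)\<^sup>2 - (s1 - s2)*(s1*l2\<^sup>2 + s1* s2\<^sup>2 - s2*l1\<^sup>2 - s2* s1\<^sup>2) = s1* s2*((l1-l2)\<^sup>2 + (s1-s2)\<^sup>2)"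
    by (simp add: power2_eq_square algebra_simps)
  have "s1* s2*((l1-l2)\<^sup>2 + (s1-s2)\<^sup>2) \<ge> 0" using s1 s2 by simp
  then obtain a where a: "(s1 - s2)*a\<^sup>2 - 2*(s1*l2 - s2*l1)*a + (s1*l2\<^sup>2 + s1* s2\<^sup>2 - s2*l1\<^sup>2 - s2* s1\<^sup>2) = 0"
    using quad_root[of "s1 - s2" "s1*l2 - s2*l1" "s1*l2\<^sup>2 + s1* s2\<^sup>2 - s2*l1\<^sup>2 - s2* s1\<^sup>2"] False disc by auto
  define L1 where "L1 = l1 - a"
  define L2 where "L2 = l2 - a"
  define r1 where "r1 = L1\<^sup>2+s1\<^sup>2"
  define r2 where "r2 = L2\<^sup>2+s2\<^sup>2"
  have r: "r1 > 0" "r2 > 0" unfolding r1_def r2_def using s1 s2 by (simp_all add: add_nonneg_pos)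
  have eqa: "s1 * r2 = s2 * r1"
  proof -
    have "s1 * r2 - s2 * r1 = (s1 - s2)*a\<^sup>2 - 2*(s1*l2 - s2*l1)*a + (s1*l2\<^sup>2 + s1* s2\<^sup>2 - s2*l1\<^sup>2 - s2* s1\<^sup>2)"
      unfolding r1_def r2_def L1_def L2_def by (simp add: power2_eq_square algebra_simps)
    then show ?thesis using a by simp
  qed
  define \<sigma> where "\<sigma> = s1/r1"
  have sig: "s2/r2 = \<sigma>" unfolding \<sigma>_def using eqa r by (simp add: field_simps)
  have sigpos: "\<sigma> > 0" unfolding \<sigma>_def using s1 r by simp
  define M1 where "M1 = -L1/r1"
  define M2 where "M2 = -L2/r2"
  define l where "l = (M2 - M1)/2"
  have rho: "rho_cauchy \<alpha> l1 s1 l2 s2 = rho_cauchy \<alpha> (-l) \<sigma> l \<sigma>" if al: "0 \<le> \<alpha>" "\<alpha> \<le> 1" for \<alpha>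
  proof -
    have "rho_cauchy \<alpha> l1 s1 l2 s2 = rho_cauchy \<alpha> ((l1-a)/1) (s1/\<bar>1\<bar>) ((l2-a)/1) (s2/\<bar>1\<bar>)"
      by (rule rho_affine[OF s1 s2]) simp
    also have "\<dots> = rho_cauchy \<alpha> L1 s1 L2 s2" unfolding L1_def L2_def by simp
    also have "\<dots> = rho_cauchy \<alpha> M1 (s1/r1) M2 (s2/r2)"
      using rho_inv[OF s1 s2 al, of L1 L2] unfolding M1_def M2_def r1_def r2_def .
    also have "\<dots> = rho_cauchy \<alpha> M1 \<sigma> M2 \<sigma>" unfolding sig \<sigma>_def ..
    also have "\<dots> = rho_cauchy \<alpha> (-l) \<sigma> l \<sigma>" unfolding l_def by (rule rho_eqscale[OF sigpos])
    finally show ?thesis .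
  qed
  have "mm l1 s1 l2 s2 = mm L1 s1 L2 s2" unfolding L1_def L2_def mm_def by simp
  also have "\<dots> = mm M1 (s1/r1) M2 (s2/r2)"
    using mm_inv[OF s1 s2, of L1 L2] unfolding M1_def M2_def r1_def r2_def by simp
  also have "\<dots> = mm M1 \<sigma> M2 \<sigma>" unfolding sig \<sigma>_def ..
  also have "\<dots> = mm (-l) \<sigma> l \<sigma>" unfolding l_def by (rule mm_eqscale)
  finally show ?thesis using rho sigpos by blast
qed



lemma rho_swap: "rho_cauchy \<alpha> l1 s1 l2 s2 = rho_cauchy (1-\<alpha>) l2 s2 l1 s1"
  unfolding rho_cauchy_def by (simp add: mult.commute)

lemma rho_symm:
  assumes s1: "s1 > 0" and s2: "s2 > 0" and al: "0 \<le> \<alpha>" "\<alpha> \<le> 1"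
  shows "rho_cauchy \<alpha> l1 s1 l2 s2 = rho_cauchy (1-\<alpha>) l1 s1 l2 s2"
proof -
  obtain l s where s: "s > 0" and R: "\<And>\<alpha>. 0 \<le> \<alpha> \<Longrightarrow> \<alpha> \<le> 1 \<Longrightarrow> rho_cauchy \<alpha> l1 s1 l2 s2 = rho_cauchy \<alpha> (-l) s l s"
    using reduce[OF s1 s2] by blast
  have "rho_cauchy \<alpha> (-l) s l s = rho_cauchy \<alpha> ((-l-0)/(-1)) (s/\<bar>-1\<bar>) ((l-0)/(-1)) (s/\<bar>-1\<bar>)"
    by (rule rho_affine[OF s s]) simp
  also have "\<dots> = rho_cauchy \<alpha> l s (-l) s" by simp
  also have "\<dots> = rho_cauchy (1-\<alpha>) (-l) s l s" by (rule rho_swap)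
  finally show ?thesis using R al by simp
qed

lemma K_ge:
  assumes m: "0 \<le> m" "m < 1"
  shows "ellipK m \<ge> pi/2"
proof -
  have c: "((\<lambda>u. 1) has_integral pi/2) {0..pi/2}"
    using has_integral_const_real[of "1::real" 0 "pi/2"] by simp
  have "1 \<le> hK m u" for u
  proof -
    have w: "0 < 1 - m * (sin u)\<^sup>2" by (rule hK_arg_pos[OF m])
    have "1 - m * (sin u)\<^sup>2 \<le> 1" using m by simp
    then have "sqrt (1 - m * (sin u)\<^sup>2) \<le> 1" by simp
    then show ?thesis unfolding hK_def using w by (simp add: field_simps)
  qed
  then show ?thesis using has_integral_le[OF c K_hk[OF m]] by simp
qed

lemma rho_half_formula:
  assumes s1: "s1 > 0" and s2: "s2 > 0"
  shows "rho_cauchy (1/2) l1 s1 l2 s2 = 2/pi * sqrt (1 - mm l1 s1 l2 s2) * ellipK (mm l1 s1 l2 s2)"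
    and "0 \<le> mm l1 s1 l2 s2" "mm l1 s1 l2 s2 < 1"
proof -
  obtain l s where s: "s > 0" and R: "\<And>\<alpha>. 0 \<le> \<alpha> \<Longrightarrow> \<alpha> \<le> 1 \<Longrightarrow> rho_cauchy \<alpha> l1 s1 l2 s2 = rho_cauchy \<alpha> (-l) s l s"
    and M: "mm l1 s1 l2 s2 = mm (-l) s l s"
    using reduce[OF s1 s2] by blast
  have lpos: "l\<^sup>2+s\<^sup>2 > 0" using s by (simp add: add_nonneg_pos)
  have Mc: "mm (-l) s l s = l\<^sup>2/(l\<^sup>2+s\<^sup>2)"
  proof -
    have "mm (-l) s l s = (4*l\<^sup>2)/(4*l\<^sup>2+4* s\<^sup>2)" unfolding mm_def by (simp add: power2_eq_square algebra_simps)
    also have "\<dots> = (4*l\<^sup>2)/(4*(l\<^sup>2+s\<^sup>2))" by (rule arg_cong[where f="\<lambda>x. 4*l\<^sup>2/x"]) simp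
    also have "\<dots> = l\<^sup>2/(l\<^sup>2+s\<^sup>2)" by (rule mult_divide_mult_cancel_left) simp
    finally show ?thesis .
  qed
  have sq: "sqrt (1 - l\<^sup>2/(l\<^sup>2+s\<^sup>2)) = s / sqrt (l\<^sup>2+s\<^sup>2)"
  proof -
    have ne: "l\<^sup>2+s\<^sup>2 \<noteq> 0" using lpos by linarith
    have "1 - l\<^sup>2/(l\<^sup>2+s\<^sup>2) = (l\<^sup>2+s\<^sup>2)/(l\<^sup>2+s\<^sup>2) - l\<^sup>2/(l\<^sup>2+s\<^sup>2)" using ne by simp
    also have "\<dots> = s\<^sup>2/(l\<^sup>2+s\<^sup>2)" unfolding diff_divide_distrib[symmetric] by simp
    finally have "1 - l\<^sup>2/(l\<^sup>2+s\<^sup>2) = s\<^sup>2/(l\<^sup>2+s\<^sup>2)" .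
    then show ?thesis using s by (simp add: real_sqrt_divide)
  qed
  have "rho_cauchy (1/2) l1 s1 l2 s2 = 2 * s/(pi * sqrt(l\<^sup>2+s\<^sup>2)) * ellipK (l\<^sup>2/(l\<^sup>2+s\<^sup>2))"
    using R[of "1/2"] canon_rho[OF s, of l] by simp
  also have "\<dots> = 2/pi * sqrt (1 - l\<^sup>2/(l\<^sup>2+s\<^sup>2)) * ellipK (l\<^sup>2/(l\<^sup>2+s\<^sup>2))" unfolding sq by simp
  finally show "rho_cauchy (1/2) l1 s1 l2 s2 = 2/pi * sqrt (1 - mm l1 s1 l2 s2) * ellipK (mm l1 s1 l2 s2)"
    unfolding M Mc .
  show "0 \<le> mm l1 s1 l2 s2" unfolding M Mc using lpos by simp
  show "mm l1 s1 l2 s2 < 1" unfolding M Mc using lpos s by (simp add: field_simps)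
qed

lemma rho_half_pos:
  assumes s1: "s1 > 0" and s2: "s2 > 0"
  shows "rho_cauchy (1/2) l1 s1 l2 s2 > 0"
proof -
  have m: "0 \<le> mm l1 s1 l2 s2" "mm l1 s1 l2 s2 < 1" using rho_half_formula[OF s1 s2] by auto
  have "ellipK (mm l1 s1 l2 s2) > 0" using K_ge[OF m] pi_gt_zero by linarith
  moreover have "sqrt (1 - mm l1 s1 l2 s2) > 0" using m by simp
  ultimately show ?thesis unfolding rho_half_formula(1)[OF s1 s2] by simp
qed

lemma rho_half_le:
  assumes s1: "s1 > 0" and s2: "s2 > 0" and al: "0 \<le> \<alpha>" "\<alpha> \<le> 1"
  shows "rho_cauchy (1/2) l1 s1 l2 s2 \<le> rho_cauchy \<alpha> l1 s1 l2 s2"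
proof -
  have al': "0 \<le> 1-\<alpha>" "1-\<alpha> \<le> 1" using al by auto
  let ?A = "FF \<alpha> l1 s1 l2 s2" and ?B = "FF (1-\<alpha>) l1 s1 l2 s2" and ?H = "FF (1/2) l1 s1 l2 s2"
  have pt: "?H x \<le> (?A x + ?B x)/2" for x
  proof -
    define p where "p = cauchy_pdf l1 s1 x"
    define q where "q = cauchy_pdf l2 s2 x"
    have pq: "p > 0" "q > 0" unfolding p_def q_def using pdf_pos s1 s2 by auto
    have AB: "?A x * ?B x = p * q"
    proof -
      have "?A x * ?B x = (p powr \<alpha> * p powr (1-\<alpha>)) * (q powr (1-\<alpha>) * q powr (1 - (1-\<alpha>)))"
        unfolding FF_def p_def q_def by (simp add: algebra_simps)
      also have "\<dots> = p * q" using pq by (simp add: powr_add[symmetric])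
      finally show ?thesis .
    qed
    have H: "?H x = sqrt (p * q)"
      unfolding FF_def p_def[symmetric] q_def[symmetric] using pq by (simp add: powr_half_sqrt real_sqrt_mult)
    have "?A x \<ge> 0" using FF_pos[OF s1 s2, of \<alpha> l1 l2 x] by simp
    moreover have "?B x \<ge> 0" using FF_pos[OF s1 s2, of "1-\<alpha>" l1 l2 x] by simp
    ultimately show ?thesis using arith_geo_mean_sqrt[of "?A x" "?B x"] unfolding H AB by simp
  qed
  have "integral\<^sup>L lborel ?H \<le> integral\<^sup>L lborel (\<lambda>x. (?A x + ?B x)/2)"
    using FF_int[OF s1 s2] al al' pt by (intro integral_mono) auto
  also have "\<dots> = (integral\<^sup>L lborel ?A + integral\<^sup>L lborel ?B)/2"
    using FF_int[OF s1 s2 al] FF_int[OF s1 s2 al'] by simp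
  also have "\<dots> = rho_cauchy \<alpha> l1 s1 l2 s2"
    using rho_symm[OF s1 s2 al, of l1 l2] unfolding rho_FF by simp
  finally show ?thesis unfolding rho_FF .
qed

theorem propositionA4:
  fixes l1 s1 l2 s2 :: real
  assumes "s1 > 0" and "s2 > 0"
  defines "\<delta> \<equiv> l1 - l2"
  shows "rho_cauchy (1/2) l1 s1 l2 s2
           = (LINT x|lborel. sqrt (cauchy_pdf l1 s1 x * cauchy_pdf l2 s2 x))
       \<and> (LINT x|lborel. sqrt (cauchy_pdf l1 s1 x * cauchy_pdf l2 s2 x))
           = 4 * sqrt (s1 * s2) / (pi * sqrt ((s1 + s2)\<^sup>2 + \<delta>\<^sup>2))
             * ellipK (((s1 - s2)\<^sup>2 + \<delta>\<^sup>2) / ((s1 + s2)\<^sup>2 + \<delta>\<^sup>2))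
       \<and> DC_cauchy l1 s1 l2 s2 = DB_cauchy (1/2) l1 s1 l2 s2
       \<and> DB_cauchy (1/2) l1 s1 l2 s2 = - ln (rho_cauchy (1/2) l1 s1 l2 s2)"
proof (intro conjI)
  note s1 = assms(1) and s2 = assms(2)
  show P1: "rho_cauchy (1/2) l1 s1 l2 s2 = (LINT x|lborel. sqrt (cauchy_pdf l1 s1 x * cauchy_pdf l2 s2 x))"
    by (rule rho_half_sqrt[OF s1 s2])
  define D where "D = (s1 + s2)\<^sup>2 + \<delta>\<^sup>2"
  have Dpos: "D > 0" unfolding D_def using s1 s2 by (simp add: add_pos_nonneg)
  have mmd: "mm l1 s1 l2 s2 = ((s1 - s2)\<^sup>2 + \<delta>\<^sup>2) / ((s1 + s2)\<^sup>2 + \<delta>\<^sup>2)"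
    unfolding mm_def \<delta>_def ..
  have one: "1 - mm l1 s1 l2 s2 = 4 * (s1 * s2) / D"
    unfolding mmd D_def[symmetric] using Dpos by (simp add: field_simps D_def power2_eq_square)
  have sq: "sqrt (1 - mm l1 s1 l2 s2) = 2 * sqrt (s1 * s2) / sqrt D"
    unfolding one by (simp add: real_sqrt_divide real_sqrt_mult)
  show "(LINT x|lborel. sqrt (cauchy_pdf l1 s1 x * cauchy_pdf l2 s2 x))
           = 4 * sqrt (s1 * s2) / (pi * sqrt ((s1 + s2)\<^sup>2 + \<delta>\<^sup>2))
             * ellipK (((s1 - s2)\<^sup>2 + \<delta>\<^sup>2) / ((s1 + s2)\<^sup>2 + \<delta>\<^sup>2))"
  proof -
    have mmD: "mm l1 s1 l2 s2 = ((s1 - s2)\<^sup>2 + \<delta>\<^sup>2) / D" unfolding mmd D_def ..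
    have "rho_cauchy (1/2) l1 s1 l2 s2 = 2/pi * (2 * sqrt (s1 * s2) / sqrt D) * ellipK (((s1 - s2)\<^sup>2 + \<delta>\<^sup>2) / D)"
      unfolding rho_half_formula(1)[OF s1 s2] sq unfolding mmD ..
    also have "\<dots> = 4 * sqrt (s1 * s2) / (pi * sqrt D) * ellipK (((s1 - s2)\<^sup>2 + \<delta>\<^sup>2) / D)"
      by simp
    finally show ?thesis unfolding P1[symmetric] D_def .
  qed
  show DB: "DB_cauchy (1/2) l1 s1 l2 s2 = - ln (rho_cauchy (1/2) l1 s1 l2 s2)"
    unfolding DB_cauchy_def ..
  show "DC_cauchy l1 s1 l2 s2 = DB_cauchy (1/2) l1 s1 l2 s2"
    unfolding DC_cauchy_def
  proof (rule cSup_eq_maximum)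
    show "DB_cauchy (1/2) l1 s1 l2 s2 \<in> (\<lambda>\<alpha>. DB_cauchy \<alpha> l1 s1 l2 s2) ` {0..1}" by auto
    fix y assume "y \<in> (\<lambda>\<alpha>. DB_cauchy \<alpha> l1 s1 l2 s2) ` {0..1}"
    then obtain \<alpha> where al: "0 \<le> \<alpha>" "\<alpha> \<le> 1" and y: "y = DB_cauchy \<alpha> l1 s1 l2 s2" by auto
    have p: "rho_cauchy (1/2) l1 s1 l2 s2 > 0" by (rule rho_half_pos[OF s1 s2])
    have "rho_cauchy (1/2) l1 s1 l2 s2 \<le> rho_cauchy \<alpha> l1 s1 l2 s2" by (rule rho_half_le[OF s1 s2 al])
    then have "ln (rho_cauchy (1/2) l1 s1 l2 s2) \<le> ln (rho_cauchy \<alpha> l1 s1 l2 s2)"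
      using p by simp
    then show "y \<le> DB_cauchy (1/2) l1 s1 l2 s2" unfolding y DB_cauchy_def by simp
  qed
qed

end
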